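(* Let $\mathcal{C}$, $\mathcal{X}$, $\mathcal{I}$ be three similar configurations of $d$ doors, where $\mathcal{X}$ is cascading and $\mathcal{I}$ is independent. Then for every knock sequence $\pi$, $$\mathbb{T}_{\mathcal{I}}(\pi)\le \mathbb{T}_{\mathcal{C}}(\pi)\le \mathbb{T}_{\mathcal{X}}(\pi),$$ and consequently $\mathbb{T}_{\mathcal{I}}\le \mathbb{T}_{\mathcal{C}}\le \mathbb{T}_{\mathcal{X}}$.
   Context: Dependent doors model. Fix an integer $d\ge 2$ and doors $1,\dots,d$, all initially closed; once a door opens it stays open forever. A configuration $\mathcal{C}$ specifies for each door $i$ a function $\phi_i^{\mathcal{C}}$ mapping every finite nonempty sequence $(X_1,\dots,X_n)$ of subsets of $\{1,\dots,i-1\}$ to $[0,1]$: $\phi_i^{\mathcal{C}}(X_1,\dots,X_n)$ is the probability that door $i$ has opened during $n$ knocks on it, where $X_j$ is the set of open doors among $\{1,\dots,i-1\}$ at the time of the $j$-th knock on door $i$ (so a closed door $i$ opens at its $n$-th knock with conditional probability $(\phi_i(X_1..X_n)-\phi_i(X_1..X_{n-1}))/(1-\phi_i(X_1..X_{n-1}))$, with $\phi_i$ of the empty sequence equal to $0$). Configurations are assumed monotone ($\phi_i(X')\le\phi_i(X)$ whenever $X'$ is a, not necessarily consecutive, subsequence of $X$) and positively correlated ($\phi_i(X'_1,\dots,X'_n)\le\phi_i(X_1,\dots,X_n)$ whenever $X'_j\subseteq X_j$ for all $j$). The fundamental distribution of door $i$ is $p_i(n)=1-\phi_i(\{1,\dots,i-1\}^n)$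 ($p_i(0)=1$), and $E_i=\sum_{n\ge0}p_i(n)$ is assumed finite. Two configurations are similar if for every $i$ door $i$ has the same fundamental distribution in both. A configuration is independent if $\phi_i(X_1,\dots,X_k)=\phi_i(\{1,\dots,i-1\}^k)$ for all inputs, and cascading if $\phi_i(X_1,\dots,X_k)=\phi_i(\{1,\dots,i-1\}^t)$ where $t$ is the number of $j$ with $X_j=\{1,\dots,i-1\}$. A knock sequence $\pi$ is an infinite sequence of door indices, executed in order without any feedback; $\mathbb{T}_{\mathcal{C}}(\pi)$ is the expected number of knocks until all $d$ doors are open, and $\mathbb{T}_{\mathcal{C}}=\inf_\pi \mathbb{T}_{\mathcal{C}}(\pi)$. *)

theory Defs
  imports Complex_Main "HOL-Library.Sublist" "HOL-Library.Extended_Nonnegative_Real"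
begin

text \<open>Doors are 1..d. A configuration is given by phi :: nat => nat set list => real,
  where phi i [X_1,...,X_n] is the probability that door i has opened during n knocks,
  X_j being the set of open doors among 1..i-1 at the j-th knock on door i.
  phiz extends phi by the value 0 on the empty sequence.\<close>

definition phiz :: "(nat \<Rightarrow> nat set list \<Rightarrow> real) \<Rightarrow> nat \<Rightarrow> nat set list \<Rightarrow> real" where
  "phiz phi i xs = (if xs = [] then 0 else phi i xs)"

definition valid_input :: "nat \<Rightarrow> nat set list \<Rightarrow> bool" where
  "valid_input i xs \<longleftrightarrow> (\<forall>X\<in>set xs. X \<subseteq> {1..<i})"

definition fund :: "(nat \<Rightarrow> nat set list \<Rightarrow> real) \<Rightarrow> nat \<Rightarrow> nat \<Rightarrow> real" where
  "fund phi i n = 1 - phiz phi i (replicate n {1..<i})"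

text \<open>A (monotone, positively correlated) configuration of d doors with finite E_i.\<close>
definition configuration :: "nat \<Rightarrow> (nat \<Rightarrow> nat set list \<Rightarrow> real) \<Rightarrow> bool" where
  "configuration d phi \<longleftrightarrow>
     (\<forall>i\<in>{1..d}. \<forall>xs. xs \<noteq> [] \<and> valid_input i xs \<longrightarrow> 0 \<le> phi i xs \<and> phi i xs \<le> 1)
   \<and> (\<forall>i\<in>{1..d}. \<forall>xs ys. valid_input i xs \<and> valid_input i ys \<and> subseq ys xs
        \<longrightarrow> phiz phi i ys \<le> phiz phi i xs)
   \<and> (\<forall>i\<in>{1..d}. \<forall>xs ys. valid_input i xs \<and> valid_input i ys \<and> list_all2 (\<subseteq>) ys xs
        \<longrightarrow> phiz phi i ys \<le> phiz phi i xs)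
   \<and> (\<forall>i\<in>{1..d}. summable (fund phi i))"

definition similar :: "nat \<Rightarrow> (nat \<Rightarrow> nat set list \<Rightarrow> real) \<Rightarrow> (nat \<Rightarrow> nat set list \<Rightarrow> real) \<Rightarrow> bool" where
  "similar d phi psi \<longleftrightarrow> (\<forall>i\<in>{1..d}. \<forall>n. fund phi i n = fund psi i n)"

definition independent_config :: "nat \<Rightarrow> (nat \<Rightarrow> nat set list \<Rightarrow> real) \<Rightarrow> bool" where
  "independent_config d phi \<longleftrightarrow> (\<forall>i\<in>{1..d}. \<forall>xs. xs \<noteq> [] \<and> valid_input i xs \<longrightarrow>
      phi i xs = phi i (replicate (length xs) {1..<i}))"

definition cascading_config :: "nat \<Rightarrow> (nat \<Rightarrow> nat set list \<Rightarrow> real) \<Rightarrow> bool" where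
  "cascading_config d phi \<longleftrightarrow> (\<forall>i\<in>{1..d}. \<forall>xs. xs \<noteq> [] \<and> valid_input i xs \<longrightarrow>
      phi i xs = phiz phi i (replicate (length (filter (\<lambda>X. X = {1..<i}) xs)) {1..<i}))"

definition knock_seq :: "nat \<Rightarrow> (nat \<Rightarrow> nat) \<Rightarrow> bool" where
  "knock_seq d \<pi> \<longleftrightarrow> (\<forall>t. \<pi> t \<in> {1..d})"

text \<open>One step of the process. chron = [S_0, ..., S_t] are the sets of open doors
  before knocks 0..t (S_0 = {}); knock number t is on door \<pi> t. Returns the
  probability that the set of open doors after knock t is S'.\<close>
definition step_prob :: "(nat \<Rightarrow> nat set list \<Rightarrow> real) \<Rightarrow> (nat \<Rightarrow> nat) \<Rightarrow> nat set list \<Rightarrow> nat set \<Rightarrow> real" where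
  "step_prob phi \<pi> chron S' =
    (let t = length chron - 1; S = last chron; i = \<pi> t in
     if i \<in> S then (if S' = S then 1 else 0)
     else
       (let Xs = map (\<lambda>s. chron ! s \<inter> {1..<i}) (filter (\<lambda>s. \<pi> s = i) [0..<Suc t]);
            c = (phiz phi i Xs - phiz phi i (butlast Xs)) / (1 - phiz phi i (butlast Xs))
        in if S' = insert i S then c else if S' = S then 1 - c else 0))"

text \<open>Probability of a history, stored most recent first: [S_t, ..., S_1, S_0].\<close>
fun hist_prob :: "(nat \<Rightarrow> nat set list \<Rightarrow> real) \<Rightarrow> (nat \<Rightarrow> nat) \<Rightarrow> nat set list \<Rightarrow> real" where
  "hist_prob phi \<pi> [] = 0"
| "hist_prob phi \<pi> [S] = (if S = {} then 1 else 0)"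
| "hist_prob phi \<pi> (S' # S # rest) =
     hist_prob phi \<pi> (S # rest) * step_prob phi \<pi> (rev (S # rest)) S'"

definition not_done_prob :: "nat \<Rightarrow> (nat \<Rightarrow> nat set list \<Rightarrow> real) \<Rightarrow> (nat \<Rightarrow> nat) \<Rightarrow> nat \<Rightarrow> real" where
  "not_done_prob d phi \<pi> t =
     (\<Sum>h\<in>{h. length h = Suc t \<and> (\<forall>S\<in>set h. S \<subseteq> {1..d})}.
        if hd h = {1..d} then 0 else hist_prob phi \<pi> h)"

text \<open>Expected number of knocks until all doors are open: sum over t of P(T > t).\<close>
definition exp_time :: "nat \<Rightarrow> (nat \<Rightarrow> nat set list \<Rightarrow> real) \<Rightarrow> (nat \<Rightarrow> nat) \<Rightarrow> ennreal" where
  "exp_time d phi \<pi> = (\<Sum>t. ennreal (not_done_prob d phi \<pi> t))"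

definition opt_time :: "nat \<Rightarrow> (nat \<Rightarrow> nat set list \<Rightarrow> real) \<Rightarrow> ennreal" where
  "opt_time d phi = (INF \<pi>\<in>{\<pi>. knock_seq d \<pi>}. exp_time d phi \<pi>)"

end

theory Submission
  imports Defs
begin


lemma hist_rev:
  assumes "c \<noteq> []"
  shows "hist_prob phi \<pi> (rev c) = (if c!0 = {} then 1 else 0) *
     (\<Prod>s<length c - 1. step_prob phi \<pi> (take (Suc s) c) (c ! Suc s))"
  using assms
proof (induction c rule: rev_induct)
  case Nil then show ?case by simp
next
  case (snoc x xs)
  show ?case
  proof (cases "xs = []")
    case True then show ?thesis by simp
  next
    case False
    obtain S rest where sr: "rev xs = S # rest" using False
      by (metis list.exhaust rev_is_Nil_conv)
    have xsr: "rev (S # rest) = xs" using sr by (metis rev_rev_ident)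
    have "hist_prob phi \<pi> (rev (xs @ [x])) = hist_prob phi \<pi> (rev xs) * step_prob phi \<pi> xs x"
      using sr xsr by simp
    also have "\<dots> = (if xs!0 = {} then 1 else 0) *
     (\<Prod>s<length xs - 1. step_prob phi \<pi> (take (Suc s) xs) (xs ! Suc s)) * step_prob phi \<pi> xs x"
      using snoc.IH False by simp
    also have "(\<Prod>s<length xs - 1. step_prob phi \<pi> (take (Suc s) xs) (xs ! Suc s))
       = (\<Prod>s<length xs - 1. step_prob phi \<pi> (take (Suc s) (xs @ [x])) ((xs @ [x]) ! Suc s))"
      by (rule prod.cong) (auto simp: nth_append)
    also have "step_prob phi \<pi> xs x = step_prob phi \<pi> (take (Suc (length xs - 1)) (xs @ [x])) ((xs @ [x]) ! Suc (length xs - 1))"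
      using False by simp
    finally show ?thesis using False
      by (simp add: nth_append lessThan_Suc_eq_insert_0 del: prod.lessThan_Suc)
         (cases "length xs", simp_all add: ac_simps)
  qed
qed



definition Xl :: "(nat \<Rightarrow> nat) \<Rightarrow> nat \<Rightarrow> nat set list \<Rightarrow> nat \<Rightarrow> nat set list" where
  "Xl \<pi> k c n = map (\<lambda>r. c!r \<inter> {1..<k}) (filter (\<lambda>r. \<pi> r = k) [0..<n])"

definition ph :: "(nat \<Rightarrow> nat set list \<Rightarrow> real) \<Rightarrow> (nat \<Rightarrow> nat) \<Rightarrow> nat \<Rightarrow> nat set list \<Rightarrow> nat \<Rightarrow> real" where
  "ph phi \<pi> k c n = phiz phi k (Xl \<pi> k c n)"

definition fac :: "(nat \<Rightarrow> nat set list \<Rightarrow> real) \<Rightarrow> (nat \<Rightarrow> nat) \<Rightarrow> nat \<Rightarrow> nat set list \<Rightarrow> nat \<Rightarrow> real" where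
  "fac phi \<pi> k c s = (if \<pi> s = k then
      (if k \<in> c!s then (if k \<in> c!Suc s then 1 else 0)
       else (let q = (ph phi \<pi> k c (Suc s) - ph phi \<pi> k c s) / (1 - ph phi \<pi> k c s)
             in if k \<in> c!Suc s then q else 1 - q))
     else (if (k \<in> c!Suc s) = (k \<in> c!s) then 1 else 0))"

lemma prod_ind: "finite A \<Longrightarrow> (\<Prod>k\<in>A. (if P k then 1 else 0::real)) = (if \<forall>k\<in>A. P k then 1 else 0)"
  by (induction A rule: finite_induct) auto

lemma step_fac:
  assumes "Suc s < length c" "c!s \<subseteq> {1..d}" "c!Suc s \<subseteq> {1..d}" "\<pi> s \<in> {1..d}"
  shows "step_prob phi \<pi> (take (Suc s) c) (c ! Suc s) = (\<Prod>k\<in>{1..d}. fac phi \<pi> k c s)"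
proof -
  define i where "i = \<pi> s"
  define S where "S = c!s"
  define S' where "S' = c!Suc s"
  have len: "length (take (Suc s) c) = Suc s" using assms by simp
  have lst: "last (take (Suc s) c) = S" unfolding S_def using assms
    by (subst last_conv_nth) auto
  have Xs: "map (\<lambda>r. take (Suc s) c ! r \<inter> {1..<i}) (filter (\<lambda>r. \<pi> r = i) [0..<Suc s]) = Xl \<pi> i c (Suc s)"
    unfolding Xl_def
  proof (rule map_cong[OF refl])
    fix r assume "r \<in> set (filter (\<lambda>r. \<pi> r = i) [0..<Suc s])"
    then have "r < Suc s" by (simp only: set_filter set_upt) auto
    then show "take (Suc s) c ! r \<inter> {1..<i} = c ! r \<inter> {1..<i}" by simp
  qed
  have bl: "butlast (Xl \<pi> i c (Suc s)) = Xl \<pi> i c s"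
    unfolding Xl_def i_def by simp
  have others: "(\<Prod>k\<in>{1..d}-{i}. fac phi \<pi> k c s) = (if \<forall>k\<in>{1..d}-{i}. (k \<in> S') = (k \<in> S) then 1 else 0)"
    unfolding fac_def S_def S'_def i_def by (subst prod_ind[symmetric]) (auto intro!: prod.cong)
  have split: "(\<Prod>k\<in>{1..d}. fac phi \<pi> k c s) = fac phi \<pi> i c s * (\<Prod>k\<in>{1..d}-{i}. fac phi \<pi> k c s)"
    using assms(4) unfolding i_def by (simp add: prod.remove)
  have eqS: "S' = S \<longleftrightarrow> (i \<in> S' \<longleftrightarrow> i \<in> S) \<and> (\<forall>k\<in>{1..d}-{i}. (k \<in> S') = (k \<in> S))"
    using assms unfolding S_def S'_def i_def by blast
  have eqI: "S' = insert i S \<longleftrightarrow> i \<in> S' \<and> (\<forall>k\<in>{1..d}-{i}. (k \<in> S') = (k \<in> S))"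
    using assms unfolding S_def S'_def i_def by blast
  define q where "q = (ph phi \<pi> i c (Suc s) - ph phi \<pi> i c s) / (1 - ph phi \<pi> i c s)"
  have step: "step_prob phi \<pi> (take (Suc s) c) S' = (if i \<in> S then (if S' = S then 1 else 0)
      else if S' = insert i S then q else if S' = S then 1 - q else 0)"
    unfolding step_prob_def Let_def len diff_Suc_1 lst
    unfolding i_def[symmetric] Xs bl q_def ph_def ..
  have fi: "fac phi \<pi> i c s = (if i \<in> S then (if i \<in> S' then 1 else 0) else if i \<in> S' then q else 1 - q)"
    unfolding fac_def q_def Let_def S_def S'_def i_def by simp
  have ne: "insert i S \<noteq> S" if "i \<notin> S" using that by blast
  show ?thesis
    unfolding split others S'_def[symmetric] step fi
    using eqS eqI ne by (cases "i \<in> S"; cases "i \<in> S'") simp_all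
qed

definition D :: "(nat \<Rightarrow> nat set list \<Rightarrow> real) \<Rightarrow> (nat \<Rightarrow> nat) \<Rightarrow> nat \<Rightarrow> nat \<Rightarrow> nat set list \<Rightarrow> real" where
  "D phi \<pi> N k c = (if k \<in> c!0 then 0 else 1) * (\<Prod>s<N. fac phi \<pi> k c s)"

definition P :: "(nat \<Rightarrow> nat set list \<Rightarrow> real) \<Rightarrow> (nat \<Rightarrow> nat) \<Rightarrow> nat \<Rightarrow> nat \<Rightarrow> nat set list \<Rightarrow> real" where
  "P phi \<pi> N k c = (\<Prod>j\<in>{1..k}. D phi \<pi> N j c)"

definition Hs :: "nat \<Rightarrow> nat \<Rightarrow> nat set list set" where
  "Hs N k = {c. length c = Suc N \<and> (\<forall>S\<in>set c. S \<subseteq> {1..k})}"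

definition base :: "nat \<Rightarrow> nat set list \<Rightarrow> real" where
  "base d c = (if last c = {1..d} then 0 else 1)"

lemma hist_P:
  assumes "c \<in> Hs N d" "knock_seq d \<pi>"
  shows "hist_prob phi \<pi> (rev c) = P phi \<pi> N d c"
proof -
  have len: "length c = Suc N" and sub: "\<And>r. r < Suc N \<Longrightarrow> c!r \<subseteq> {1..d}"
    using assms(1) unfolding Hs_def by (auto simp: nth_mem)
  have c0: "(if c!0 = {} then 1 else 0::real) = (\<Prod>k\<in>{1..d}. (if k \<in> c!0 then 0 else 1))"
  proof -
    have "(\<Prod>k\<in>{1..d}. (if k \<in> c!0 then 0 else 1::real)) = (\<Prod>k\<in>{1..d}. (if k \<notin> c!0 then 1 else 0))"
      by (rule prod.cong) auto
    also have "\<dots> = (if \<forall>k\<in>{1..d}. k \<notin> c!0 then 1 else 0)" by (rule prod_ind) simp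
    also have "(\<forall>k\<in>{1..d}. k \<notin> c!0) = (c!0 = {})" using sub[of 0] by auto
    finally show ?thesis by simp
  qed
  have st: "(\<Prod>s<N. step_prob phi \<pi> (take (Suc s) c) (c ! Suc s)) = (\<Prod>s<N. \<Prod>k\<in>{1..d}. fac phi \<pi> k c s)"
    by (rule prod.cong[OF refl], rule step_fac) (use len sub assms(2) in \<open>auto simp: knock_seq_def\<close>)
  have "hist_prob phi \<pi> (rev c) = (if c!0 = {} then 1 else 0) *
     (\<Prod>s<length c - 1. step_prob phi \<pi> (take (Suc s) c) (c ! Suc s))"
    by (rule hist_rev) (use len in auto)
  also have "\<dots> = (\<Prod>k\<in>{1..d}. (if k \<in> c!0 then 0 else 1)) * (\<Prod>k\<in>{1..d}. \<Prod>s<N. fac phi \<pi> k c s)"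
    unfolding c0 len diff_Suc_1 st by (subst prod.swap) simp
  also have "\<dots> = P phi \<pi> N d c"
    unfolding P_def D_def by (simp add: prod.distrib)
  finally show ?thesis .
qed

lemma finite_Hs: "finite (Hs N k)"
proof -
  have "Hs N k \<subseteq> {xs. set xs \<subseteq> Pow {1..k} \<and> length xs = Suc N}"
    unfolding Hs_def by auto
  moreover have "finite {xs. set xs \<subseteq> Pow {1..k} \<and> length xs = Suc N}"
    by (rule finite_lists_length_eq) simp
  ultimately show ?thesis by (rule finite_subset)
qed

lemma not_done_sum:
  assumes "knock_seq d \<pi>"
  shows "not_done_prob d phi \<pi> N = (\<Sum>c\<in>Hs N d. P phi \<pi> N d c * base d c)"
proof -
  have set: "{h. length h = Suc N \<and> (\<forall>S\<in>set h. S \<subseteq> {1..d})} = rev ` Hs N d"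
  proof (intro set_eqI iffI)
    fix h assume "h \<in> {h. length h = Suc N \<and> (\<forall>S\<in>set h. S \<subseteq> {1..d})}"
    then have "rev h \<in> Hs N d" unfolding Hs_def by auto
    then show "h \<in> rev ` Hs N d" by (metis image_eqI rev_rev_ident)
  qed (auto simp: Hs_def)
  show ?thesis
    unfolding not_done_prob_def set
    apply (subst sum.reindex)
     apply (simp add: inj_on_def)
    apply (rule sum.cong[OF refl])
    subgoal for c
      using hist_P[OF _ assms, of c N phi]
      by (auto simp: Hs_def base_def hd_rev)
    done
qed



definition mrg :: "nat \<Rightarrow> nat set list \<Rightarrow> bool list \<Rightarrow> nat set list" where
  "mrg k c b = map (\<lambda>r. if b!r then insert k (c!r) else c!r) [0..<length c]"

definition Bl :: "nat \<Rightarrow> bool list set" where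
  "Bl N = {b. length b = Suc N}"

lemma finite_Bl: "finite (Bl N)"
proof -
  have "Bl N = {xs. set xs \<subseteq> UNIV \<and> length xs = Suc N}" unfolding Bl_def by auto
  then show ?thesis using finite_lists_length_eq[of "UNIV::bool set" "Suc N"] by simp
qed

lemma mrg_len[simp]: "length (mrg k c b) = length c"
  unfolding mrg_def by simp

lemma mrg_nth: "r < length c \<Longrightarrow> mrg k c b ! r = (if b!r then insert k (c!r) else c!r)"
  unfolding mrg_def by simp

lemma mrg_bij:
  assumes "1 \<le> k"
  shows "bij_betw (\<lambda>(c, b). mrg k c b) (Hs N (k-1) \<times> Bl N) (Hs N k)"
proof (rule bij_betw_byWitness[where f'="\<lambda>c. (map (\<lambda>S. S - {k}) c, map (\<lambda>S. k \<in> S) c)"])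
  show "\<forall>a\<in>Hs N (k - 1) \<times> Bl N. (\<lambda>c. (map (\<lambda>S. S - {k}) c, map (\<lambda>S. k \<in> S) c)) ((\<lambda>(c, b). mrg k c b) a) = a"
  proof
    fix a assume a: "a \<in> Hs N (k - 1) \<times> Bl N"
    obtain c b where ab: "a = (c, b)" by fastforce
    have cb: "c \<in> Hs N (k-1)" "b \<in> Bl N" using a ab by auto
    have lc: "length c = Suc N" and lb: "length b = Suc N"
      using cb unfolding Hs_def Bl_def by auto
    have sub: "c!r \<subseteq> {1..k-1}" if "r < Suc N" for r
    proof -
      have "c!r \<in> set c" using lc that by simp
      then show ?thesis using cb unfolding Hs_def by blast
    qed
    have nk: "k \<notin> c!r" if "r < Suc N" for r using sub[OF that] assms by auto
    have "map (\<lambda>S. S - {k}) (mrg k c b) = c"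
    proof (rule nth_equalityI)
      fix i assume "i < length (map (\<lambda>S. S - {k}) (mrg k c b))"
      then have i: "i < Suc N" using lc by simp
      show "map (\<lambda>S. S - {k}) (mrg k c b) ! i = c ! i"
        using i lc nk[OF i] by (auto simp: mrg_nth)
    qed (simp)
    moreover have "map (\<lambda>S. k \<in> S) (mrg k c b) = b"
    proof (rule nth_equalityI)
      fix i assume "i < length (map (\<lambda>S. k \<in> S) (mrg k c b))"
      then have i: "i < Suc N" using lc by simp
      show "map (\<lambda>S. k \<in> S) (mrg k c b) ! i = b ! i"
        using i lc nk[OF i] by (simp add: mrg_nth)
    qed (use lc lb in simp)
    ultimately show "(\<lambda>c. (map (\<lambda>S. S - {k}) c, map (\<lambda>S. k \<in> S) c)) ((\<lambda>(c, b). mrg k c b) a) = a"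
      using ab by simp
  qed
  show "\<forall>a'\<in>Hs N k. (\<lambda>(c, b). mrg k c b) ((\<lambda>c. (map (\<lambda>S. S - {k}) c, map (\<lambda>S. k \<in> S) c)) a') = a'"
  proof
    fix c assume "c \<in> Hs N k"
    have "mrg k (map (\<lambda>S. S - {k}) c) (map (\<lambda>S. k \<in> S) c) = c"
    proof (rule nth_equalityI)
      fix i assume "i < length (mrg k (map (\<lambda>S. S - {k}) c) (map (\<lambda>S. k \<in> S) c))"
      then have i: "i < length c" by simp
      show "mrg k (map (\<lambda>S. S - {k}) c) (map (\<lambda>S. k \<in> S) c) ! i = c ! i"
        using i by (simp add: mrg_nth) blast
    qed simp
    then show "(\<lambda>(c, b). mrg k c b) ((\<lambda>c. (map (\<lambda>S. S - {k}) c, map (\<lambda>S. k \<in> S) c)) c) = c"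
      by simp
  qed
  show "(\<lambda>(c, b). mrg k c b) ` (Hs N (k - 1) \<times> Bl N) \<subseteq> Hs N k"
  proof clarify
    fix c b assume a: "c \<in> Hs N (k - 1)" "b \<in> Bl N"
    have cb: "c \<in> Hs N (k-1)" "b \<in> Bl N" using a by auto
    have lc: "length c = Suc N" and lb: "length b = Suc N"
      using cb unfolding Hs_def Bl_def by auto
    have sub: "c!r \<subseteq> {1..k-1}" if "r < Suc N" for r
    proof -
      have "c!r \<in> set c" using lc that by simp
      then show ?thesis using cb unfolding Hs_def by blast
    qed
    show "mrg k c b \<in> Hs N k"
      unfolding Hs_def
    proof (intro CollectI conjI ballI)
      show "length (mrg k c b) = Suc N" using lc by simp
      fix S assume "S \<in> set (mrg k c b)"
      then obtain r where r: "r < Suc N" "S = mrg k c b ! r" using lc by (auto simp: in_set_conv_nth)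
      have "c!r \<subseteq> {1..k-1}" using sub r(1) by blast
      moreover have "{1..k-1} \<subseteq> {1..k}" by auto
      ultimately have "c!r \<subseteq> {1..k}" by blast
      moreover have "k \<in> {1..k}" using assms by simp
      ultimately show "S \<subseteq> {1..k}" using r lc by (simp add: mrg_nth)
    qed
  qed
  show "(\<lambda>c. (map (\<lambda>S. S - {k}) c, map (\<lambda>S. k \<in> S) c)) ` Hs N k \<subseteq> Hs N (k - 1) \<times> Bl N"
  proof (rule image_subsetI)
    fix c assume c: "c \<in> Hs N k"
    have "S - {k} \<subseteq> {1..k-1}" if "S \<in> set c" for S
    proof -
      have "S \<subseteq> {1..k}" using c that unfolding Hs_def by blast
      then show ?thesis by auto
    qed
    then have A: "map (\<lambda>S. S - {k}) c \<in> Hs N (k - 1)" using c unfolding Hs_def by auto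
    have B: "map (\<lambda>S. k \<in> S) c \<in> Bl N" using c unfolding Hs_def Bl_def by auto
    show "(map (\<lambda>S. S - {k}) c, map (\<lambda>S. k \<in> S) c) \<in> Hs N (k - 1) \<times> Bl N"
      using A B by blast
  qed
qed

lemma fiber:
  assumes "1 \<le> k"
  shows "sum F (Hs N k) = (\<Sum>c\<in>Hs N (k-1). \<Sum>b\<in>Bl N. F (mrg k c b))"
proof -
  have "(\<Sum>c\<in>Hs N (k-1). \<Sum>b\<in>Bl N. F (mrg k c b)) = (\<Sum>(c,b)\<in>Hs N (k-1) \<times> Bl N. F (mrg k c b))"
    by (rule sum.cartesian_product)
  also have "\<dots> = (\<Sum>x\<in>Hs N (k-1) \<times> Bl N. F ((\<lambda>(c, b). mrg k c b) x))"
    by (rule sum.cong) auto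
  also have "\<dots> = sum F (Hs N k)"
    by (rule sum.reindex_bij_betw[OF mrg_bij[OF assms]])
  finally show ?thesis by simp
qed

lemma mrg_mem: "r < length c \<Longrightarrow> j \<noteq> k \<Longrightarrow> (j \<in> mrg k c b ! r) = (j \<in> c!r)"
  by (simp add: mrg_nth)

lemma mrg_int: "r < length c \<Longrightarrow> j \<le> k \<Longrightarrow> mrg k c b ! r \<inter> {1..<j} = c!r \<inter> {1..<j}"
  by (auto simp: mrg_nth)

lemma Xl_mrg: "n \<le> length c \<Longrightarrow> j \<le> k \<Longrightarrow> Xl \<pi> j (mrg k c b) n = Xl \<pi> j c n"
  unfolding Xl_def
proof (rule map_cong[OF refl])
  fix r assume "n \<le> length c" "j \<le> k" "r \<in> set (filter (\<lambda>r. \<pi> r = j) [0..<n])"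
  then show "mrg k c b ! r \<inter> {1..<j} = c ! r \<inter> {1..<j}" by (intro mrg_int) auto
qed

lemma fac_mrg:
  assumes "Suc s < length c" "j < k"
  shows "fac phi \<pi> j (mrg k c b) s = fac phi \<pi> j c s"
proof -
  have 1: "(j \<in> mrg k c b ! s) = (j \<in> c!s)" by (rule mrg_mem) (use assms in auto)
  have 2: "(j \<in> mrg k c b ! Suc s) = (j \<in> c!Suc s)" by (rule mrg_mem) (use assms in auto)
  have 3: "Xl \<pi> j (mrg k c b) s = Xl \<pi> j c s" by (rule Xl_mrg) (use assms in auto)
  have 4: "Xl \<pi> j (mrg k c b) (Suc s) = Xl \<pi> j c (Suc s)" by (rule Xl_mrg) (use assms in auto)
  show ?thesis unfolding fac_def ph_def 1 2 3 4 ..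
qed

lemma D_mrg:
  assumes "length c = Suc N" "j < k"
  shows "D phi \<pi> N j (mrg k c b) = D phi \<pi> N j c"
proof -
  have 1: "(j \<in> mrg k c b ! 0) = (j \<in> c!0)" by (rule mrg_mem) (use assms in auto)
  have 2: "(\<Prod>s<N. fac phi \<pi> j (mrg k c b) s) = (\<Prod>s<N. fac phi \<pi> j c s)"
    by (rule prod.cong[OF refl], rule fac_mrg) (use assms in auto)
  show ?thesis unfolding D_def 1 2 ..
qed

lemma P_mrg:
  assumes "1 \<le> k" "length c = Suc N"
  shows "P phi \<pi> N k (mrg k c b) = D phi \<pi> N k (mrg k c b) * P phi \<pi> N (k-1) c"
proof -
  have "{1..k} = insert k {1..k-1}" using assms by auto
  then have "P phi \<pi> N k (mrg k c b) = (\<Prod>j\<in>insert k {1..k-1}. D phi \<pi> N j (mrg k c b))"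
    unfolding P_def by simp
  also have "\<dots> = D phi \<pi> N k (mrg k c b) * (\<Prod>j\<in>{1..k-1}. D phi \<pi> N j (mrg k c b))"
    by (rule prod.insert) (use assms in auto)
  also have "(\<Prod>j\<in>{1..k-1}. D phi \<pi> N j (mrg k c b)) = P phi \<pi> N (k-1) c"
    unfolding P_def by (rule prod.cong) (use assms in \<open>auto simp: D_mrg\<close>)
  finally show ?thesis .
qed

definition Kop :: "(nat \<Rightarrow> nat set list \<Rightarrow> real) \<Rightarrow> (nat \<Rightarrow> nat) \<Rightarrow> nat \<Rightarrow> nat \<Rightarrow> (nat set list \<Rightarrow> real) \<Rightarrow> nat set list \<Rightarrow> real" where
  "Kop phi \<pi> N k G c = (\<Sum>b\<in>Bl N. D phi \<pi> N k (mrg k c b) * G (mrg k c b))"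

fun Vf :: "(nat \<Rightarrow> nat set list \<Rightarrow> real) \<Rightarrow> (nat \<Rightarrow> nat) \<Rightarrow> nat \<Rightarrow> nat \<Rightarrow> nat \<Rightarrow> nat set list \<Rightarrow> real" where
  "Vf phi \<pi> N d 0 c = base d c"
| "Vf phi \<pi> N d (Suc j) c = Kop phi \<pi> N (d - j) (Vf phi \<pi> N d j) c"

lemma chain:
  assumes "j \<le> d"
  shows "(\<Sum>c\<in>Hs N d. P phi \<pi> N d c * base d c) = (\<Sum>c\<in>Hs N (d-j). P phi \<pi> N (d-j) c * Vf phi \<pi> N d j c)"
  using assms
proof (induction j)
  case 0 then show ?case by simp
next
  case (Suc j)
  define k where "k = d - j"
  have k1: "1 \<le> k" and km: "d - Suc j = k - 1" using Suc.prems unfolding k_def by auto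
  have "(\<Sum>c\<in>Hs N k. P phi \<pi> N k c * Vf phi \<pi> N d j c)
      = (\<Sum>c\<in>Hs N (k-1). \<Sum>b\<in>Bl N. P phi \<pi> N k (mrg k c b) * Vf phi \<pi> N d j (mrg k c b))"
    by (rule fiber[OF k1])
  also have "\<dots> = (\<Sum>c\<in>Hs N (k-1). P phi \<pi> N (k-1) c * Kop phi \<pi> N k (Vf phi \<pi> N d j) c)"
    unfolding Kop_def sum_distrib_left
  proof (rule sum.cong[OF refl])
    fix c assume "c \<in> Hs N (k-1)"
    then have lc: "length c = Suc N" by (simp add: Hs_def)
    show "(\<Sum>b\<in>Bl N. P phi \<pi> N k (mrg k c b) * Vf phi \<pi> N d j (mrg k c b)) =
      (\<Sum>b\<in>Bl N. P phi \<pi> N (k-1) c * (D phi \<pi> N k (mrg k c b) * Vf phi \<pi> N d j (mrg k c b)))"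
      by (rule sum.cong[OF refl]) (simp add: P_mrg[OF k1 lc])
  qed
  finally have calc: "(\<Sum>c\<in>Hs N k. P phi \<pi> N k c * Vf phi \<pi> N d j c) =
     (\<Sum>c\<in>Hs N (k-1). P phi \<pi> N (k-1) c * Kop phi \<pi> N k (Vf phi \<pi> N d j) c)" .
  have IH: "(\<Sum>c\<in>Hs N d. P phi \<pi> N d c * base d c) = (\<Sum>c\<in>Hs N k. P phi \<pi> N k c * Vf phi \<pi> N d j c)"
    using Suc.IH Suc.prems unfolding k_def by simp
  have last: "(\<Sum>c\<in>Hs N (d - Suc j). P phi \<pi> N (d - Suc j) c * Vf phi \<pi> N d (Suc j) c)
     = (\<Sum>c\<in>Hs N (k-1). P phi \<pi> N (k-1) c * Kop phi \<pi> N k (Vf phi \<pi> N d j) c)"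
    unfolding km Vf.simps k_def ..
  show ?case using IH calc last by linarith
qed

lemma Hs0: "Hs N 0 = {replicate (Suc N) {}}"
  unfolding Hs_def by (auto intro: replicate_eqI simp del: replicate_Suc)

lemma not_done_Vf:
  assumes "knock_seq d \<pi>"
  shows "not_done_prob d phi \<pi> N = Vf phi \<pi> N d d (replicate (Suc N) {})"
proof -
  have "not_done_prob d phi \<pi> N = (\<Sum>c\<in>Hs N d. P phi \<pi> N d c * base d c)"
    by (rule not_done_sum[OF assms])
  also have "\<dots> = (\<Sum>c\<in>Hs N (d-d). P phi \<pi> N (d-d) c * Vf phi \<pi> N d d c)"
    by (rule chain) simp
  also have "\<dots> = P phi \<pi> N 0 (replicate (Suc N) {}) * Vf phi \<pi> N d d (replicate (Suc N) {})"
    by (simp add: Hs0)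
  also have "P phi \<pi> N 0 (replicate (Suc N) {}) = 1" unfolding P_def by simp
  finally show ?thesis by simp
qed



definition cfg :: "nat \<Rightarrow> (nat \<Rightarrow> nat set list \<Rightarrow> real) \<Rightarrow> bool" where
  "cfg d phi \<longleftrightarrow>
     (\<forall>k\<in>{1..d}. \<forall>xs. valid_input k xs \<longrightarrow> 0 \<le> phiz phi k xs \<and> phiz phi k xs \<le> 1)
   \<and> (\<forall>k\<in>{1..d}. \<forall>xs ys. valid_input k xs \<and> valid_input k ys \<and> subseq ys xs
        \<longrightarrow> phiz phi k ys \<le> phiz phi k xs)
   \<and> (\<forall>k\<in>{1..d}. \<forall>xs ys. valid_input k xs \<and> valid_input k ys \<and> list_all2 (\<subseteq>) ys xs
        \<longrightarrow> phiz phi k ys \<le> phiz phi k xs)"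

lemma configuration_cfg: "configuration d phi \<Longrightarrow> cfg d phi"
  unfolding configuration_def cfg_def
proof (elim conjE, intro conjI)
  assume b: "\<forall>i\<in>{1..d}. \<forall>xs. xs \<noteq> [] \<and> valid_input i xs \<longrightarrow> 0 \<le> phi i xs \<and> phi i xs \<le> 1"
  show "\<forall>k\<in>{1..d}. \<forall>xs. valid_input k xs \<longrightarrow> 0 \<le> phiz phi k xs \<and> phiz phi k xs \<le> 1"
    using b by (auto simp: phiz_def)
qed

lemma valid_Xl: "valid_input k (Xl \<pi> k c n)"
  unfolding valid_input_def Xl_def by auto

lemma ph0[simp]: "ph phi \<pi> k c 0 = 0"
  unfolding ph_def Xl_def phiz_def by simp

lemma cfg_bnd:
  assumes "cfg d phi" "k \<in> {1..d}" "valid_input k xs"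
  shows "0 \<le> phiz phi k xs \<and> phiz phi k xs \<le> 1"
proof -
  have "\<forall>k\<in>{1..d}. \<forall>xs. valid_input k xs \<longrightarrow> 0 \<le> phiz phi k xs \<and> phiz phi k xs \<le> 1"
    using assms(1) unfolding cfg_def by (rule conjunct1)
  then show ?thesis using assms(2,3) by blast
qed

lemma cfg_sub:
  assumes "cfg d phi" "k \<in> {1..d}" "valid_input k xs" "valid_input k ys" "subseq ys xs"
  shows "phiz phi k ys \<le> phiz phi k xs"
proof -
  have "\<forall>k\<in>{1..d}. \<forall>xs ys. valid_input k xs \<and> valid_input k ys \<and> subseq ys xs
        \<longrightarrow> phiz phi k ys \<le> phiz phi k xs"
    using assms(1) unfolding cfg_def by (elim conjE)
  then show ?thesis using assms(2-5) by blast
qed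

lemma cfg_corr:
  assumes "cfg d phi" "k \<in> {1..d}" "valid_input k xs" "valid_input k ys" "list_all2 (\<subseteq>) ys xs"
  shows "phiz phi k ys \<le> phiz phi k xs"
proof -
  have "\<forall>k\<in>{1..d}. \<forall>xs ys. valid_input k xs \<and> valid_input k ys \<and> list_all2 (\<subseteq>) ys xs
        \<longrightarrow> phiz phi k ys \<le> phiz phi k xs"
    using assms(1) unfolding cfg_def by (elim conjE)
  then show ?thesis using assms(2-5) by blast
qed

lemma ph_bounds:
  assumes "cfg d phi" "k \<in> {1..d}"
  shows "0 \<le> ph phi \<pi> k c n" "ph phi \<pi> k c n \<le> 1"
  using cfg_bnd[OF assms valid_Xl] unfolding ph_def by auto

lemma Xl_prefix: "n \<le> m \<Longrightarrow> subseq (Xl \<pi> k c n) (Xl \<pi> k c m)"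
proof -
  assume "n \<le> m"
  then have "[0..<m] = [0..<n] @ [n..<m]"
    using upt_add_eq_append[of 0 n "m - n"] by simp
  then have "Xl \<pi> k c m = Xl \<pi> k c n @ map (\<lambda>r. c!r \<inter> {1..<k}) (filter (\<lambda>r. \<pi> r = k) [n..<m])"
    unfolding Xl_def by simp
  then show ?thesis using subseq_rev_drop_many[OF subseq_order.order_refl[of "Xl \<pi> k c n"]] by simp
qed

lemma ph_mono:
  assumes "cfg d phi" "k \<in> {1..d}" "n \<le> m"
  shows "ph phi \<pi> k c n \<le> ph phi \<pi> k c m"
  unfolding ph_def by (rule cfg_sub[OF assms(1,2) valid_Xl valid_Xl Xl_prefix[OF assms(3)]])

lemma ph_nok: "\<pi> n \<noteq> k \<Longrightarrow> ph phi \<pi> k c (Suc n) = ph phi \<pi> k c n"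
  unfolding ph_def Xl_def by simp

lemma list_all2_mapmap: "(\<And>x. x \<in> set xs \<Longrightarrow> R (f x) (g x)) \<Longrightarrow> list_all2 R (map f xs) (map g xs)"
  by (induction xs) auto

lemma Xl_corr:
  assumes "list_all2 (\<subseteq>) c1 c2" "n \<le> length c1"
  shows "list_all2 (\<subseteq>) (Xl \<pi> k c1 n) (Xl \<pi> k c2 n)"
  unfolding Xl_def
proof (rule list_all2_mapmap)
  fix r assume "r \<in> set (filter (\<lambda>r. \<pi> r = k) [0..<n])"
  then have "r < length c1" using assms(2) by auto
  then show "c1 ! r \<inter> {1..<k} \<subseteq> c2 ! r \<inter> {1..<k}"
    using assms(1) by (auto simp: list_all2_conv_all_nth)
qed

lemma ph_corr:
  assumes "cfg d phi" "k \<in> {1..d}" "list_all2 (\<subseteq>) c1 c2" "n \<le> length c1"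
  shows "ph phi \<pi> k c1 n \<le> ph phi \<pi> k c2 n"
  unfolding ph_def by (rule cfg_corr[OF assms(1,2) valid_Xl valid_Xl Xl_corr[OF assms(3,4)]])

definition bt :: "nat \<Rightarrow> nat \<Rightarrow> bool list" where
  "bt N t = map (\<lambda>r. t < r) [0..<Suc N]"

lemma bt_len[simp]: "length (bt N t) = Suc N" unfolding bt_def by simp
lemma bt_nth: "r < Suc N \<Longrightarrow> bt N t ! r = (t < r)" unfolding bt_def by (simp del: upt_Suc)
lemma bt_Bl: "bt N t \<in> Bl N" unfolding Bl_def by simp

lemma Hs_len: "c \<in> Hs N k \<Longrightarrow> length c = Suc N" unfolding Hs_def by simp
lemma Hs_nth: "c \<in> Hs N k \<Longrightarrow> r < Suc N \<Longrightarrow> c!r \<subseteq> {1..k}"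
  unfolding Hs_def by (auto simp: nth_mem)

lemma mrg_k:
  assumes "c \<in> Hs N (k-1)" "1 \<le> k" "r < Suc N"
  shows "(k \<in> mrg k c b ! r) = b!r"
proof -
  have "k \<notin> c!r" using Hs_nth[OF assms(1,3)] assms(2) by auto
  then show ?thesis using assms Hs_len[OF assms(1)] by (simp add: mrg_nth)
qed

lemma support:
  assumes c: "c \<in> Hs N (k-1)" and k: "1 \<le> k" and b: "b \<in> Bl N"
    and nz: "D phi \<pi> N k (mrg k c b) \<noteq> 0"
  shows "b \<in> bt N ` {..N}"
proof -
  have lb: "length b = Suc N" using b unfolding Bl_def by simp
  have mk: "\<And>r. r < Suc N \<Longrightarrow> (k \<in> mrg k c b ! r) = b!r" using mrg_k[OF c k] .
  have b0: "\<not> b!0" using nz mk[of 0] unfolding D_def by auto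
  have facnz: "fac phi \<pi> k (mrg k c b) s \<noteq> 0" if "s < N" for s
    using nz that unfolding D_def by (auto simp: prod_zero_iff)
  have monob: "b!Suc s" if "s < N" "b!s" for s
  proof -
    have "k \<in> mrg k c b ! s" using mk[of s] that by simp
    then have "k \<in> mrg k c b ! Suc s" using facnz[OF that(1)] unfolding fac_def by (auto split: if_splits)
    then show ?thesis using mk[of "Suc s"] that by simp
  qed
  show ?thesis
  proof (cases "\<exists>r\<le>N. b!r")
    case False
    have "b = bt N N"
      by (rule nth_equalityI) (use False lb in \<open>auto simp: bt_nth\<close>)
    then show ?thesis by blast
  next
    case True
    define r0 where "r0 = (LEAST r. r \<le> N \<and> b!r)"
    have r0: "r0 \<le> N \<and> b!r0" unfolding r0_def using True by (rule LeastI_ex)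
    have least: "\<not> b!r" if "r < r0" for r
    proof -
      have "\<not> (r \<le> N \<and> b!r)" using that unfolding r0_def by (rule not_less_Least)
      then show ?thesis using that r0 by simp
    qed
    have r0pos: "0 < r0" using r0 b0 by (cases r0) auto
    have up: "b!r" if "r0 \<le> r" "r \<le> N" for r
      using that(1)
    proof (induction r rule: dec_induct)
      case base then show ?case using r0 by simp
    next
      case (step n) then show ?case using monob[of n] that(2) by simp
    qed
    have "b = bt N (r0 - 1)"
    proof (rule nth_equalityI)
      show "length b = length (bt N (r0 - 1))" using lb by simp
      fix r assume "r < length b"
      then have r: "r < Suc N" using lb by simp
      show "b ! r = bt N (r0 - 1) ! r"
        using up[of r] least[of r] r r0pos by (cases "r0 \<le> r") (auto simp: bt_nth)
    qed
    moreover have "r0 - 1 \<in> {..N}" using r0 by auto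
    ultimately show ?thesis by blast
  qed
qed

lemma bt_inj: "inj_on (bt N) {..N}"
proof (rule inj_onI)
  fix x y assume xy: "x \<in> {..N}" "y \<in> {..N}" "bt N x = bt N y"
  show "x = y"
  proof (rule ccontr)
    assume "x \<noteq> y"
    then consider "x < y" | "y < x" by linarith
    then show False
    proof cases
      case 1
      have "bt N x ! Suc x" using xy(1,2) 1 by (simp add: bt_nth)
      moreover have "\<not> bt N y ! Suc x" using xy(1,2) 1 by (simp add: bt_nth)
      ultimately show False using xy(3) by metis
    next
      case 2
      have "bt N y ! Suc y" using xy(1,2) 2 by (simp add: bt_nth)
      moreover have "\<not> bt N x ! Suc y" using xy(1,2) 2 by (simp add: bt_nth)
      ultimately show False using xy(3) by metis
    qed
  qed
qed

lemma prefix_formula: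
  assumes phi: "cfg d phi" and kd: "k \<in> {1..d}" and c: "c \<in> Hs N (k-1)" and t: "t \<le> N"
    and n: "n \<le> N"
  defines "cc \<equiv> mrg k c (bt N t)"
  shows "(if k \<in> cc!0 then 0 else 1) * (\<Prod>s<n. fac phi \<pi> k cc s)
     = (if t < n then ph phi \<pi> k cc (Suc t) - ph phi \<pi> k cc t else 1 - ph phi \<pi> k cc n)"
  using n
proof (induction n)
  case 0
  have "k \<notin> cc!0" unfolding cc_def using mrg_k[OF c] kd by (simp add: bt_nth)
  then show ?case by simp
next
  case (Suc n)
  have k1: "1 \<le> k" using kd by simp
  have mem: "(k \<in> cc!r) = (t < r)" if "r < Suc N" for r
    unfolding cc_def using mrg_k[OF c k1 that] that by (simp add: bt_nth)
  have nN: "n < N" using Suc.prems by simp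
  have IH: "(if k \<in> cc!0 then 0 else 1) * (\<Prod>s<n. fac phi \<pi> k cc s)
     = (if t < n then ph phi \<pi> k cc (Suc t) - ph phi \<pi> k cc t else 1 - ph phi \<pi> k cc n)"
    using Suc by simp
  have m1: "(k \<in> cc!n) = (t < n)" using mem[of n] nN by simp
  have m2: "(k \<in> cc!Suc n) = (t < Suc n)" using mem[of "Suc n"] nN by simp
  define a where "a = ph phi \<pi> k cc n"
  define a' where "a' = ph phi \<pi> k cc (Suc n)"
  have aa: "a \<le> a'" unfolding a_def a'_def by (rule ph_mono[OF phi kd]) simp
  have a'1: "a' \<le> 1" unfolding a'_def by (rule ph_bounds[OF phi kd])
  have "(if k \<in> cc!0 then 0 else 1) * (\<Prod>s<Suc n. fac phi \<pi> k cc s)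
      = ((if k \<in> cc!0 then 0 else 1) * (\<Prod>s<n. fac phi \<pi> k cc s)) * fac phi \<pi> k cc n"
    by simp
  also have "\<dots> = (if t < n then ph phi \<pi> k cc (Suc t) - ph phi \<pi> k cc t else 1 - a) * fac phi \<pi> k cc n"
    unfolding IH a_def ..
  also have "\<dots> = (if t < Suc n then ph phi \<pi> k cc (Suc t) - ph phi \<pi> k cc t else 1 - a')"
  proof (cases "\<pi> n = k")
    case False
    have aeq: "a' = a" unfolding a_def a'_def using False by (rule ph_nok)
    have f: "fac phi \<pi> k cc n = (if t = n then 0 else 1)"
      unfolding fac_def using False m1 m2 by auto
    show ?thesis
    proof (cases "t = n")
      case True then show ?thesis using f aeq a_def a'_def by simp
    qed (use f aeq in auto)
  next
    case True
    define q where "q = (a' - a) / (1 - a)"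
    have f: "fac phi \<pi> k cc n = (if t < n then 1 else if t = n then q else 1 - q)"
      unfolding fac_def q_def a_def a'_def Let_def using True m1 m2 by auto
    show ?thesis
    proof (cases "a = 1")
      case True
      then have "a' = 1" using aa a'1 by simp
      then show ?thesis using True f q_def a_def a'_def by (cases "t < n"; cases "t = n") auto
    next
      case False
      then have "(1 - a) * q = a' - a" unfolding q_def by simp
      moreover have "(1 - a) * (1 - q) = 1 - a'" using \<open>(1 - a) * q = a' - a\<close>
        by (simp add: algebra_simps)
      ultimately show ?thesis using f a_def a'_def by (cases "t < n"; cases "t = n") auto
    qed
  qed
  finally show ?case unfolding a'_def .
qed

lemma Kop_formula:
  assumes phi: "cfg d phi" and kd: "k \<in> {1..d}" and c: "c \<in> Hs N (k-1)"
  shows "Kop phi \<pi> N k G c = (\<Sum>t<N. (ph phi \<pi> k c (Suc t) - ph phi \<pi> k c t) * G (mrg k c (bt N t)))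
           + (1 - ph phi \<pi> k c N) * G (mrg k c (bt N N))"
proof -
  have k1: "1 \<le> k" using kd by simp
  have lc: "length c = Suc N" using Hs_len[OF c] .
  define f where "f b = D phi \<pi> N k (mrg k c b) * G (mrg k c b)" for b
  have "Kop phi \<pi> N k G c = sum f (Bl N)" unfolding Kop_def f_def ..
  also have "\<dots> = sum f (bt N ` {..N})"
  proof (rule sum.mono_neutral_right[OF finite_Bl])
    show "bt N ` {..N} \<subseteq> Bl N" using bt_Bl by blast
    show "\<forall>i\<in>Bl N - bt N ` {..N}. f i = 0"
      using support[OF c k1] unfolding f_def by fastforce
  qed
  also have "\<dots> = sum (f \<circ> bt N) {..N}" by (rule sum.reindex[OF bt_inj])
  also have "{..N} = insert N {..<N}" by auto
  also have "sum (f \<circ> bt N) (insert N {..<N}) = f (bt N N) + sum (f \<circ> bt N) {..<N}"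
    by simp
  also have "\<And>t. t \<le> N \<Longrightarrow> D phi \<pi> N k (mrg k c (bt N t))
      = (if t < N then ph phi \<pi> k c (Suc t) - ph phi \<pi> k c t else 1 - ph phi \<pi> k c N)"
  proof -
    fix t assume t: "t \<le> N"
    have "D phi \<pi> N k (mrg k c (bt N t)) = (if t < N then ph phi \<pi> k (mrg k c (bt N t)) (Suc t) - ph phi \<pi> k (mrg k c (bt N t)) t
       else 1 - ph phi \<pi> k (mrg k c (bt N t)) N)"
      unfolding D_def by (rule prefix_formula[OF phi kd c t order_refl])
    moreover have "ph phi \<pi> k (mrg k c (bt N t)) m = ph phi \<pi> k c m" if "m \<le> Suc N" for m
      unfolding ph_def using Xl_mrg[of m c k k \<pi> "bt N t"] that lc by simp
    ultimately show "D phi \<pi> N k (mrg k c (bt N t))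
      = (if t < N then ph phi \<pi> k c (Suc t) - ph phi \<pi> k c t else 1 - ph phi \<pi> k c N)"
      using t by auto
  qed
  then have "f (bt N N) + sum (f \<circ> bt N) {..<N} = (1 - ph phi \<pi> k c N) * G (mrg k c (bt N N))
     + (\<Sum>t<N. (ph phi \<pi> k c (Suc t) - ph phi \<pi> k c t) * G (mrg k c (bt N t)))"
    unfolding f_def by (auto intro!: sum.cong)
  finally show ?thesis by simp
qed



definition EE :: "(nat \<Rightarrow> real) \<Rightarrow> (nat \<Rightarrow> real) \<Rightarrow> nat \<Rightarrow> real" where
  "EE f w n = (\<Sum>t<n. (f (Suc t) - f t) * w t) + (1 - f n) * w n"

lemma abel: "EE f w n = w n - f 0 * w 0 + (\<Sum>t<n. f (Suc t) * (w t - w (Suc t)))"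
  unfolding EE_def by (induction n) (simp_all add: algebra_simps)

lemma EE_phi_mono:
  assumes "f 0 = g 0" "\<And>t. t \<le> n \<Longrightarrow> g t \<le> f t" "\<And>t. t < n \<Longrightarrow> w t \<le> w (Suc t)"
  shows "EE f w n \<le> EE g w n"
proof -
  have "(\<Sum>t<n. f (Suc t) * (w t - w (Suc t))) \<le> (\<Sum>t<n. g (Suc t) * (w t - w (Suc t)))"
  proof (rule sum_mono)
    fix t assume "t \<in> {..<n}"
    then have "g (Suc t) \<le> f (Suc t)" "w t - w (Suc t) \<le> 0" using assms by auto
    then show "f (Suc t) * (w t - w (Suc t)) \<le> g (Suc t) * (w t - w (Suc t))"
      by (rule mult_right_mono_neg)
  qed
  then show ?thesis unfolding abel using assms(1) by simp
qed

lemma EE_w_mono: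
  assumes "\<And>t. t < n \<Longrightarrow> f t \<le> f (Suc t)" "f n \<le> 1" "\<And>t. t \<le> n \<Longrightarrow> w1 t \<le> w2 t"
  shows "EE f w1 n \<le> EE f w2 n"
  unfolding EE_def
proof (rule add_mono)
  show "(\<Sum>t<n. (f (Suc t) - f t) * w1 t) \<le> (\<Sum>t<n. (f (Suc t) - f t) * w2 t)"
  proof (rule sum_mono)
    fix t assume "t \<in> {..<n}"
    then show "(f (Suc t) - f t) * w1 t \<le> (f (Suc t) - f t) * w2 t"
      using assms by (intro mult_left_mono) auto
  qed
  show "(1 - f n) * w1 n \<le> (1 - f n) * w2 n" using assms by (intro mult_left_mono) auto
qed

lemma Kop_EE:
  assumes "cfg d phi" "k \<in> {1..d}" "c \<in> Hs N (k-1)"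
  shows "Kop phi \<pi> N k G c = EE (ph phi \<pi> k c) (\<lambda>t. G (mrg k c (bt N t))) N"
  unfolding EE_def Kop_formula[OF assms] ..

lemma l2_mrg_c: "list_all2 (\<subseteq>) c1 c2 \<Longrightarrow> list_all2 (\<subseteq>) (mrg k c1 b) (mrg k c2 b)"
  by (auto simp: list_all2_conv_all_nth mrg_nth)

lemma l2_mrg_t:
  assumes "length c = Suc N" "t \<le> t'"
  shows "list_all2 (\<subseteq>) (mrg k c (bt N t')) (mrg k c (bt N t))"
  using assms by (auto simp: list_all2_conv_all_nth mrg_nth bt_nth)

lemma mrg_Hs: "c \<in> Hs N (k-1) \<Longrightarrow> 1 \<le> k \<Longrightarrow> b \<in> Bl N \<Longrightarrow> mrg k c b \<in> Hs N k"
  using bij_betw_apply[OF mrg_bij, of k "(c, b)" N] by simp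

definition anti :: "nat \<Rightarrow> nat \<Rightarrow> (nat set list \<Rightarrow> real) \<Rightarrow> bool" where
  "anti N k G \<longleftrightarrow> (\<forall>c1\<in>Hs N k. \<forall>c2\<in>Hs N k. list_all2 (\<subseteq>) c1 c2 \<longrightarrow> G c2 \<le> G c1)"

lemma w_mono:
  assumes "anti N k G" "c \<in> Hs N (k-1)" "1 \<le> k" "t < N"
  shows "G (mrg k c (bt N t)) \<le> G (mrg k c (bt N (Suc t)))"
  using assms mrg_Hs[OF assms(2,3) bt_Bl] l2_mrg_t[OF Hs_len[OF assms(2)], of t "Suc t" k]
  unfolding anti_def by auto

lemma Kop_anti:
  assumes M: "cfg d M" and kd: "k \<in> {1..d}" and G: "anti N k G"
  shows "anti N (k-1) (Kop M \<pi> N k G)"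
  unfolding anti_def
proof (intro ballI impI)
  fix c1 c2 assume c1: "c1 \<in> Hs N (k-1)" and c2: "c2 \<in> Hs N (k-1)" and le: "list_all2 (\<subseteq>) c1 c2"
  have k1: "1 \<le> k" using kd by simp
  define w1 where "w1 t = G (mrg k c1 (bt N t))" for t
  define w2 where "w2 t = G (mrg k c2 (bt N t))" for t
  have "Kop M \<pi> N k G c2 = EE (ph M \<pi> k c2) w2 N" unfolding w2_def by (rule Kop_EE[OF M kd c2])
  also have "\<dots> \<le> EE (ph M \<pi> k c2) w1 N"
  proof (rule EE_w_mono)
    show "ph M \<pi> k c2 t \<le> ph M \<pi> k c2 (Suc t)" for t by (rule ph_mono[OF M kd]) simp
    show "ph M \<pi> k c2 N \<le> 1" by (rule ph_bounds[OF M kd])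
    fix t assume "t \<le> N"
    have "list_all2 (\<subseteq>) (mrg k c1 (bt N t)) (mrg k c2 (bt N t))" by (rule l2_mrg_c[OF le])
    then show "w2 t \<le> w1 t" unfolding w1_def w2_def
      using G mrg_Hs[OF c1 k1 bt_Bl] mrg_Hs[OF c2 k1 bt_Bl] unfolding anti_def by blast
  qed
  also have "\<dots> \<le> EE (ph M \<pi> k c1) w1 N"
  proof (rule EE_phi_mono)
    show "ph M \<pi> k c2 0 = ph M \<pi> k c1 0" by simp
    show "ph M \<pi> k c1 t \<le> ph M \<pi> k c2 t" if "t \<le> N" for t
      by (rule ph_corr[OF M kd le]) (use that Hs_len[OF c1] in simp)
    show "w1 t \<le> w1 (Suc t)" if "t < N" for t
      unfolding w1_def by (rule w_mono[OF G c1 k1 that])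
  qed
  also have "\<dots> = Kop M \<pi> N k G c1" unfolding w1_def by (rule Kop_EE[OF M kd c1, symmetric])
  finally show "Kop M \<pi> N k G c2 \<le> Kop M \<pi> N k G c1" .
qed

lemma Kop_cmp:
  assumes A: "cfg d A" and B: "cfg d B" and kd: "k \<in> {1..d}"
    and dom: "\<And>xs. valid_input k xs \<Longrightarrow> phiz B k xs \<le> phiz A k xs"
    and GG: "\<And>c. c \<in> Hs N k \<Longrightarrow> GA c \<le> GB c" and an: "anti N k GB"
    and c: "c \<in> Hs N (k-1)"
  shows "Kop A \<pi> N k GA c \<le> Kop B \<pi> N k GB c"
proof -
  have k1: "1 \<le> k" using kd by simp
  define wA where "wA t = GA (mrg k c (bt N t))" for t
  define wB where "wB t = GB (mrg k c (bt N t))" for t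
  have "Kop A \<pi> N k GA c = EE (ph A \<pi> k c) wA N" unfolding wA_def by (rule Kop_EE[OF A kd c])
  also have "\<dots> \<le> EE (ph A \<pi> k c) wB N"
  proof (rule EE_w_mono)
    show "ph A \<pi> k c t \<le> ph A \<pi> k c (Suc t)" for t by (rule ph_mono[OF A kd]) simp
    show "ph A \<pi> k c N \<le> 1" by (rule ph_bounds[OF A kd])
    show "wA t \<le> wB t" for t unfolding wA_def wB_def by (rule GG[OF mrg_Hs[OF c k1 bt_Bl]])
  qed
  also have "\<dots> \<le> EE (ph B \<pi> k c) wB N"
  proof (rule EE_phi_mono)
    show "ph A \<pi> k c 0 = ph B \<pi> k c 0" by simp
    show "ph B \<pi> k c t \<le> ph A \<pi> k c t" for t unfolding ph_def by (rule dom[OF valid_Xl])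
    show "wB t \<le> wB (Suc t)" if "t < N" for t
      unfolding wB_def by (rule w_mono[OF an c k1 that])
  qed
  also have "\<dots> = Kop B \<pi> N k GB c" unfolding wB_def by (rule Kop_EE[OF B kd c, symmetric])
  finally show ?thesis .
qed

lemma base_anti: "anti N d (base d)"
  unfolding anti_def
proof (intro ballI impI)
  fix c1 c2 assume c1: "c1 \<in> Hs N d" and c2: "c2 \<in> Hs N d" and le: "list_all2 (\<subseteq>) c1 c2"
  have l1: "last c1 = c1 ! N" using Hs_len[OF c1] by (subst last_conv_nth) auto
  have l2: "last c2 = c2 ! N" using Hs_len[OF c2] by (subst last_conv_nth) auto
  have "c1 ! N \<subseteq> c2 ! N" using le Hs_len[OF c1] by (auto simp: list_all2_conv_all_nth)
  moreover have "c2 ! N \<subseteq> {1..d}" by (rule Hs_nth[OF c2]) simp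
  ultimately show "base d c2 \<le> base d c1" unfolding base_def l1 l2 by auto
qed

lemma Vf_Suc_fun: "Vf M \<pi> N d (Suc j) = Kop M \<pi> N (d - j) (Vf M \<pi> N d j)"
  by (rule ext) simp

lemma Vf_anti:
  assumes M: "cfg d M"
  shows "j \<le> d \<Longrightarrow> anti N (d-j) (Vf M \<pi> N d j)"
proof (induction j)
  case 0
  have "Vf M \<pi> N d 0 = base d" by (rule ext) simp
  then show ?case using base_anti by simp
next
  case (Suc j)
  have kd: "d - j \<in> {1..d}" using Suc.prems by auto
  have "anti N (d - j - 1) (Kop M \<pi> N (d - j) (Vf M \<pi> N d j))"
    by (rule Kop_anti[OF M kd]) (use Suc in simp)
  moreover have "d - j - 1 = d - Suc j" by simp
  ultimately show ?case unfolding Vf_Suc_fun by simp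
qed

lemma Vf_cmp:
  assumes A: "cfg d A" and B: "cfg d B"
    and dom: "\<And>k xs. k \<in> {1..d} \<Longrightarrow> valid_input k xs \<Longrightarrow> phiz B k xs \<le> phiz A k xs"
  shows "j \<le> d \<Longrightarrow> \<forall>c\<in>Hs N (d-j). Vf A \<pi> N d j c \<le> Vf B \<pi> N d j c"
proof (induction j)
  case 0 then show ?case by simp
next
  case (Suc j)
  have kd: "d - j \<in> {1..d}" using Suc.prems by auto
  have hs: "Hs N (d - Suc j) = Hs N (d - j - 1)" by simp
  show ?case unfolding Vf.simps hs
  proof
    fix c assume c: "c \<in> Hs N (d - j - 1)"
    show "Kop A \<pi> N (d - j) (Vf A \<pi> N d j) c \<le> Kop B \<pi> N (d - j) (Vf B \<pi> N d j) c"
    proof (rule Kop_cmp[OF A B kd])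
      show "phiz B (d - j) xs \<le> phiz A (d - j) xs" if "valid_input (d - j) xs" for xs
        by (rule dom[OF kd that])
      show "Vf A \<pi> N d j c \<le> Vf B \<pi> N d j c" if "c \<in> Hs N (d - j)" for c
        using Suc that by simp
      show "anti N (d - j) (Vf B \<pi> N d j)" by (rule Vf_anti[OF B]) (use Suc in simp)
      show "c \<in> Hs N (d - j - 1)" by (rule c)
    qed
  qed
qed

lemma not_done_cmp:
  assumes A: "cfg d A" and B: "cfg d B" and pi: "knock_seq d \<pi>"
    and dom: "\<And>k xs. k \<in> {1..d} \<Longrightarrow> valid_input k xs \<Longrightarrow> phiz B k xs \<le> phiz A k xs"
  shows "not_done_prob d A \<pi> N \<le> not_done_prob d B \<pi> N"
proof -
  have "\<forall>c\<in>Hs N (d-d). Vf A \<pi> N d d c \<le> Vf B \<pi> N d d c"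
    by (rule Vf_cmp[OF A B dom]) auto
  then show ?thesis unfolding not_done_Vf[OF pi] by (simp add: Hs0)
qed

lemma exp_cmp:
  assumes A: "cfg d A" and B: "cfg d B" and pi: "knock_seq d \<pi>"
    and dom: "\<And>k xs. k \<in> {1..d} \<Longrightarrow> valid_input k xs \<Longrightarrow> phiz B k xs \<le> phiz A k xs"
  shows "exp_time d A \<pi> \<le> exp_time d B \<pi>"
  unfolding exp_time_def
  by (rule suminf_le) (auto intro!: ennreal_leI not_done_cmp[OF A B pi dom])

lemma opt_cmp:
  assumes A: "cfg d A" and B: "cfg d B"
    and dom: "\<And>k xs. k \<in> {1..d} \<Longrightarrow> valid_input k xs \<Longrightarrow> phiz B k xs \<le> phiz A k xs"
  shows "opt_time d A \<le> opt_time d B"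
  unfolding opt_time_def
  by (rule INF_mono) (auto intro!: exp_cmp[OF A B _ dom])



lemma sim_rep:
  assumes "similar d phi psi" "k \<in> {1..d}"
  shows "phiz phi k (replicate n {1..<k}) = phiz psi k (replicate n {1..<k})"
  using assms unfolding similar_def fund_def by force

lemma valid_rep: "valid_input k (replicate n {1..<k})"
  unfolding valid_input_def by simp

lemma dom_IC:
  assumes C: "cfg d phiC" and sim: "similar d phiC phiI" and ind: "independent_config d phiI"
    and k: "k \<in> {1..d}" and v: "valid_input k xs"
  shows "phiz phiC k xs \<le> phiz phiI k xs"
proof (cases "xs = []")
  case True then show ?thesis by (simp add: phiz_def)
next
  case False
  have "phiz phiI k xs = phiI k (replicate (length xs) {1..<k})"
    using ind k v False unfolding independent_config_def phiz_def by simp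
  also have "\<dots> = phiz phiI k (replicate (length xs) {1..<k})" using False by (simp add: phiz_def)
  also have "\<dots> = phiz phiC k (replicate (length xs) {1..<k})" using sim_rep[OF sim k] by simp
  finally have e: "phiz phiI k xs = phiz phiC k (replicate (length xs) {1..<k})" .
  have "list_all2 (\<subseteq>) xs (replicate (length xs) {1..<k})"
    using v unfolding valid_input_def by (auto simp: list_all2_conv_all_nth nth_mem)
  then have "phiz phiC k xs \<le> phiz phiC k (replicate (length xs) {1..<k})"
    by (rule cfg_corr[OF C k valid_rep v])
  then show ?thesis using e by simp
qed

lemma rep_filter: "replicate (length (filter (\<lambda>X. X = a) xs)) a = filter (\<lambda>X. X = a) xs"
  by (induction xs) auto

lemma dom_CX:
  assumes C: "cfg d phiC" and sim: "similar d phiC phiX" and cas: "cascading_config d phiX"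
    and k: "k \<in> {1..d}" and v: "valid_input k xs"
  shows "phiz phiX k xs \<le> phiz phiC k xs"
proof (cases "xs = []")
  case True then show ?thesis by (simp add: phiz_def)
next
  case False
  define m where "m = length (filter (\<lambda>X. X = {1..<k}) xs)"
  have "phiz phiX k xs = phiz phiX k (replicate m {1..<k})"
    using cas k v False unfolding cascading_config_def m_def by (simp add: phiz_def)
  also have "\<dots> = phiz phiC k (replicate m {1..<k})" using sim_rep[OF sim k] by simp
  also have "\<dots> \<le> phiz phiC k xs"
  proof (rule cfg_sub[OF C k v valid_rep])
    show "subseq (replicate m {1..<k}) xs" unfolding m_def rep_filter by (rule subseq_filter_left)
  qed
  finally show ?thesis .
qed

theorem mainTheorem1:
  fixes d :: nat
    and phiC phiX phiI :: "nat \<Rightarrow> nat set list \<Rightarrow> real"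
  assumes "d \<ge> 2"
    and "configuration d phiC" and "configuration d phiX" and "configuration d phiI"
    and "similar d phiC phiX" and "similar d phiC phiI"
    and "cascading_config d phiX" and "independent_config d phiI"
  shows "(\<forall>\<pi>. knock_seq d \<pi> \<longrightarrow>
            exp_time d phiI \<pi> \<le> exp_time d phiC \<pi> \<and> exp_time d phiC \<pi> \<le> exp_time d phiX \<pi>)
       \<and> opt_time d phiI \<le> opt_time d phiC \<and> opt_time d phiC \<le> opt_time d phiX"
proof -
  have C: "cfg d phiC" and X: "cfg d phiX" and I: "cfg d phiI"
    using assms(2-4) by (auto intro: configuration_cfg)
  have d1: "\<And>k xs. k \<in> {1..d} \<Longrightarrow> valid_input k xs \<Longrightarrow> phiz phiC k xs \<le> phiz phiI k xs"
    by (rule dom_IC[OF C assms(6) assms(8)])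
  have d2: "\<And>k xs. k \<in> {1..d} \<Longrightarrow> valid_input k xs \<Longrightarrow> phiz phiX k xs \<le> phiz phiC k xs"
    by (rule dom_CX[OF C assms(5) assms(7)])
  show ?thesis
    using exp_cmp[OF I C _ d1] exp_cmp[OF C X _ d2] opt_cmp[OF I C d1] opt_cmp[OF C X d2]
    by blast
qed

end
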